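(* For real $0\le x<1$ and every integer $r\ge2$, $$\log\mathcal C_r\left(\frac x2\right)=-\frac{1}{2^r}\int_0^x \pi t^{r-1}\tan\left(\frac{\pi t}{2}\right)dt.$$
   Context: For an integer $r\ge2$ let $P_r(y)=(1-y)\exp\left(y+\frac{y^2}{2}+\cdots+\frac{y^r}{r}\right)$. For real $|x|<\tfrac12$, the Kurokawa–Koyama multiple cosine function of order $r$ is the convergent positive product $\mathcal C_r(x)=\prod_{n\ge1,\ n\text{ odd}}\left\{P_r\left(\frac{x}{n/2}\right)P_r\left(-\frac{x}{n/2}\right)^{(-1)^{r-1}}\right\}^{(n/2)^{r-1}}$, and $\log$ denotes the real logarithm. *)

theory Defs
  imports "HOL-Analysis.Analysis"
begin

definition Pfac :: "nat \<Rightarrow> real \<Rightarrow> real" where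
  "Pfac r y = (1 - y) * exp (\<Sum>k=1..r. y ^ k / real k)"

definition mcos :: "nat \<Rightarrow> real \<Rightarrow> real" where
  "mcos r x = (\<Prod>k. (Pfac r (x / (real (2*k+1) / 2)) *
        (Pfac r (- x / (real (2*k+1) / 2)) powr ((-1) ^ (r - 1))))
        powr ((real (2*k+1) / 2) ^ (r - 1)))"

end

theory Submission
  imports Defs
begin


lemma cos_prod_split:
  fixes t :: real
  shows "(\<Prod>j=1..2*N. 1 - t^2 / (real j)^2) =
     (\<Prod>j=1..N. 1 - (t/2)^2 / (real j)^2) * (\<Prod>k<N. 1 - t^2 / (real (2*k+1))^2)"
proof (induction N)
  case 0 then show ?case by simp
next
  case (Suc N)
  have e: "2 * Suc N = Suc (Suc (2*N))" by simp
  have "(\<Prod>j=1..2*Suc N. 1 - t^2 / (real j)^2) =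
     (1 - t^2 / (real (2*N+2))^2) * ((1 - t^2 / (real (2*N+1))^2) * (\<Prod>j=1..2*N. 1 - t^2 / (real j)^2))"
    unfolding e by (simp add: prod.nat_ivl_Suc' del: of_nat_Suc)
  also have "(real (2*N+2))^2 = 4*(real (Suc N))^2" by (simp add: power2_eq_square algebra_simps)
  then have "(1 - t^2 / (real (2*N+2))^2) = 1 - (t/2)^2 / (real (Suc N))^2"
    by (simp add: power_divide)
  finally have L0: "(\<Prod>j=1..2*Suc N. 1 - t^2 / (real j)^2) =
     (1 - (t/2)^2 / (real (Suc N))^2) * ((1 - t^2 / (real (2*N+1))^2) *
       (\<Prod>j=1..2*N. 1 - t^2 / (real j)^2))" .
  have L: "(\<Prod>j=1..2*Suc N. 1 - t^2 / (real j)^2) =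
     (1 - (t/2)^2 / (real (Suc N))^2) * ((1 - t^2 / (real (2*N+1))^2) *
       ((\<Prod>j=1..N. 1 - (t/2)^2 / (real j)^2) * (\<Prod>k<N. 1 - t^2 / (real (2*k+1))^2)))"
    using L0 by (simp only: Suc.IH)
  have r: "(\<Prod>j=1..Suc N. 1 - (t/2)^2 / (real j)^2) * (\<Prod>k<Suc N. 1 - t^2 / (real (2*k+1))^2) =
     ((1 - (t/2)^2 / (real (Suc N))^2) * (\<Prod>j=1..N. 1 - (t/2)^2 / (real j)^2)) *
     ((\<Prod>k<N. 1 - t^2 / (real (2*k+1))^2) * (1 - t^2 / (real (2*N+1))^2))"
    by (subst prod.nat_ivl_Suc') (auto simp: prod.lessThan_Suc)
  show ?case unfolding L r by (simp only: mult_ac)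
qed

lemma sin_half_ne0:
  fixes t :: real
  assumes "t \<noteq> 0" "\<bar>t\<bar> < 1"
  shows "sin (pi * (t/2)) \<noteq> 0"
proof (cases "t > 0")
  case True
  then show ?thesis using assms by (intro order.strict_implies_not_eq[symmetric] sin_gt_zero) auto
next
  case False
  then have t: "0 < -t" "-t < 1" using assms by auto
  have "0 < sin (pi * (-t/2))"
  proof (rule sin_gt_zero)
    show "0 < pi * (-t/2)" using t by (intro mult_pos_pos) auto
    have "pi * (-t/2) < pi * 1" using t by (intro mult_strict_left_mono) auto
    then show "pi * (-t/2) < pi" by simp
  qed
  then show ?thesis by (simp add: sin_minus)
qed

lemma cos_prod:
  fixes t :: real
  assumes "\<bar>t\<bar> < 1"
  shows "(\<lambda>N. \<Prod>k<N. 1 - t^2 / (real (2*k+1))^2) \<longlonglongrightarrow> cos (pi * t / 2)"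
proof (cases "t = 0")
  case True then show ?thesis by simp
next
  case False
  have A: "(\<lambda>N. \<Prod>j=1..2*N. 1 - t^2 / (real j)^2) \<longlonglongrightarrow> sin (pi * t) / (pi * t)"
    using LIMSEQ_subseq_LIMSEQ[OF sin_product_formula_real'[OF False], of "\<lambda>N. 2*N"]
    by (auto simp: strict_mono_def comp_def)
  have B: "(\<lambda>N. \<Prod>j=1..N. 1 - (t/2)^2 / (real j)^2) \<longlonglongrightarrow> sin (pi * (t/2)) / (pi * (t/2))"
    using sin_product_formula_real'[of "t/2"] False by simp
  have Bpos: "(\<Prod>j=1..N. 1 - (t/2)^2 / (real j)^2) > 0" for N
  proof (intro prod_pos)
    fix j assume "j \<in> {1..N}"
    then have "real j \<ge> 1" by auto
    then have "1 \<le> (real j)^2" by simp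
    moreover have "(t/2)^2 < 1" using assms by (simp add: abs_square_less_1)
    ultimately have "(t/2)^2 < (real j)^2" by linarith
    then show "0 < 1 - (t/2)^2 / (real j)^2" using \<open>real j \<ge> 1\<close> by (simp add: field_simps)
  qed
  have s: "sin (pi * (t/2)) \<noteq> 0" using sin_half_ne0 False assms by auto
  have C: "(\<lambda>N. (\<Prod>j=1..2*N. 1 - t^2 / (real j)^2) / (\<Prod>j=1..N. 1 - (t/2)^2 / (real j)^2))
     \<longlonglongrightarrow> (sin (pi * t) / (pi * t)) / (sin (pi * (t/2)) / (pi * (t/2)))"
    using s False by (intro tendsto_divide A B) auto
  have eq: "(\<lambda>N. (\<Prod>j=1..2*N. 1 - t^2 / (real j)^2) / (\<Prod>j=1..N. 1 - (t/2)^2 / (real j)^2))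
     = (\<lambda>N. \<Prod>k<N. 1 - t^2 / (real (2*k+1))^2)"
  proof (rule ext)
    fix N
    have "(\<Prod>j=1..N. 1 - (t/2)^2 / (real j)^2) \<noteq> 0" using Bpos[of N] by linarith
    then show "(\<Prod>j=1..2*N. 1 - t^2 / (real j)^2) / (\<Prod>j=1..N. 1 - (t/2)^2 / (real j)^2) = (\<Prod>k<N. 1 - t^2 / (real (2*k+1))^2)"
      unfolding cos_prod_split by simp
  qed
  have "sin (pi * t) = 2 * sin (pi * (t/2)) * cos (pi * (t/2))"
    using sin_double[of "pi*(t/2)"] by simp
  then have "(sin (pi * t) / (pi * t)) / (sin (pi * (t/2)) / (pi * (t/2))) = cos (pi * t / 2)"
    using s False by (simp add: field_simps)
  with C eq show ?thesis by simp
qed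

lemma sq_lt_odd:
  fixes t :: real
  assumes "\<bar>t\<bar> < 1"
  shows "t^2 < (real (2*k+1))^2"
proof -
  have "t^2 < 1" using assms by (simp add: abs_square_less_1)
  also have "1 \<le> (real (2*k+1))^2" by simp
  finally show ?thesis .
qed

lemma ln_cos_sums:
  fixes t :: real
  assumes "\<bar>t\<bar> < 1"
  shows "(\<lambda>k. ln (1 - t^2 / (real (2*k+1))^2)) sums ln (cos (pi * t / 2))"
proof -
  have pos: "0 < 1 - t^2 / (real (2*k+1))^2" for k
    using sq_lt_odd[OF assms, of k] by (simp add: field_simps)
  have c: "0 < cos (pi * t / 2)"
  proof (rule cos_gt_zero_pi)
    have "\<bar>pi * t / 2\<bar> < pi / 2" using assms by (simp add: abs_mult)
    then show "- (pi / 2) < pi * t / 2" "pi * t / 2 < pi / 2" by linarith+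
  qed
  have "(\<lambda>N. ln (\<Prod>k<N. 1 - t^2 / (real (2*k+1))^2)) \<longlonglongrightarrow> ln (cos (pi * t / 2))"
    using c by (intro tendsto_ln cos_prod assms) auto
  moreover have "(\<lambda>N. ln (\<Prod>k<N. 1 - t^2 / (real (2*k+1))^2)) = (\<lambda>N. \<Sum>k<N. ln (1 - t^2 / (real (2*k+1))^2))"
  proof (rule ext, rule ln_prod)
    fix N i show "1 - t^2 / (real (2*i+1))^2 \<noteq> 0" using pos[of i] by linarith
  qed simp
  ultimately show ?thesis unfolding sums_def by simp
qed

lemma odd_bound:
  fixes x b :: real
  assumes "\<bar>x\<bar> < b" "b < 1"
  shows "\<bar>x\<bar> / ((real (2*k+1))^2 - x^2) \<le> 1 / ((1 - b^2) * (real (k+1))^2)"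
proof -
  define n where "n = real (2*k+1)"
  have n1: "1 \<le> n" and nk: "real (k+1) \<le> n" unfolding n_def by auto
  have b0: "0 < b" using assms by linarith
  have "x^2 = \<bar>x\<bar>^2" by simp
  also have "\<bar>x\<bar>^2 < b^2" using assms by (intro power_strict_mono) auto
  finally have xb: "x^2 < b^2" .
  have b1: "b^2 < 1" using assms b0 by (simp add: power_less_one_iff)
  have "b^2 * 1 \<le> b^2 * n^2" using n1 by (intro mult_left_mono) auto
  then have "(1 - b^2) * n^2 \<le> n^2 - x^2" using xb by (simp add: algebra_simps)
  moreover have "(1 - b^2) * (real (k+1))^2 \<le> (1 - b^2) * n^2"
    using nk b1 by (intro mult_left_mono power_mono) auto
  ultimately have w: "(1 - b^2) * (real (k+1))^2 \<le> n^2 - x^2" by linarith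
  have w0: "0 < (1 - b^2) * (real (k+1))^2" using b1 by simp
  have "\<bar>x\<bar> \<le> 1" using assms by linarith
  then show ?thesis unfolding n_def[symmetric] using w w0 by (intro frac_le) auto
qed

lemma cos_half_pos:
  fixes t :: real
  assumes "\<bar>t\<bar> < 1"
  shows "0 < cos (pi * t / 2)"
proof (rule cos_gt_zero_pi)
  have "\<bar>pi * t / 2\<bar> < pi / 2" using assms by (simp add: abs_mult)
  then show "- (pi / 2) < pi * t / 2" "pi * t / 2 < pi / 2" by linarith+
qed

lemma summable_inv_sq: "summable (\<lambda>k. 1 / (real (k+1))^2)"
  using inverse_squares_sums by (simp add: sums_iff add.commute)

lemma tan_series:
  fixes t :: real assumes "\<bar>t\<bar> < 1"
  shows "(\<lambda>k. 4 * t / ((real (2*k+1))^2 - t^2)) sums (pi * tan (pi * t / 2))"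
proof -
  define b where "b = (\<bar>t\<bar> + 1) / 2"
  have tb: "\<bar>t\<bar> < b" and b1: "b < 1" using assms unfolding b_def by auto
  define S where "S = ball (0::real) b"
  have S: "x \<in> S \<longleftrightarrow> \<bar>x\<bar> < b" for x unfolding S_def by (simp add: dist_real_def)
  define f where "f k x = ln ((real (2*k+1))^2 - x^2) - ln ((real (2*k+1))^2)" for k x
  define f' where "f' k x = - (2 * x) / ((real (2*k+1))^2 - x^2)" for k x
  have feq: "f k x = ln (1 - x^2 / (real (2*k+1))^2)" if "\<bar>x\<bar> < 1" for k x
  proof -
    have n: "x^2 < (real (2*k+1))^2" using sq_lt_odd[OF that] .
    have e: "1 - x^2 / (real (2*k+1))^2 = ((real (2*k+1))^2 - x^2) / (real (2*k+1))^2"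
      by (simp add: field_simps)
    show ?thesis unfolding f_def e using n by (subst ln_div) auto
  qed
  have der: "(f k has_field_derivative f' k x) (at x)" if "\<bar>x\<bar> < 1" for k x
  proof -
    have n: "x^2 < (real (2*k+1))^2" using sq_lt_odd[OF that] .
    show ?thesis unfolding f_def f'_def
      using n by (auto intro!: derivative_eq_intros simp: field_simps)
  qed
  define M where "M k = 2 / ((1 - b^2) * (real (k+1))^2)" for k
  have bnd: "norm (f' k x) \<le> M k" if "x \<in> S" for k x
  proof -
    have xb: "\<bar>x\<bar> < b" using that S by auto
    have n: "x^2 < (real (2*k+1))^2" using sq_lt_odd[of x k] xb b1 by auto
    have "norm (f' k x) = 2 * (\<bar>x\<bar> / ((real (2*k+1))^2 - x^2))"
      using n unfolding f'_def by (simp add: abs_mult)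
    also have "\<dots> \<le> 2 * (1 / ((1 - b^2) * (real (k+1))^2))"
      using odd_bound[OF xb b1, of k] by simp
    finally show ?thesis unfolding M_def by simp
  qed
  have sM: "summable M"
    using summable_mult[OF summable_inv_sq, of "2 / (1 - b^2)"] unfolding M_def by simp
  have uc: "uniformly_convergent_on S (\<lambda>n x. \<Sum>i<n. f' i x)"
    by (rule Weierstrass_m_test'[OF bnd sM])
  have b0: "0 < b" using tb by linarith
  have D1: "((\<lambda>x. \<Sum>k. f k x) has_field_derivative (\<Sum>k. f' k t)) (at t)"
  proof (rule has_field_derivative_series'(2)[where f=f and f'=f' and S=S and x=t])
    show "convex S" unfolding S_def by simp
    show "(f n has_field_derivative f' n x) (at x within S)" if "x \<in> S" for n x
      proof -
      have "\<bar>x\<bar> < 1" using that S b1 by auto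
      then show ?thesis by (rule has_field_derivative_at_within[OF der])
    qed
    show "uniformly_convergent_on S (\<lambda>n x. \<Sum>i<n. f' i x)" by (rule uc)
    show "0 \<in> S" using S b0 by simp
    show "summable (\<lambda>n. f n 0)" unfolding f_def by simp
    show "t \<in> interior S" unfolding S_def using tb by (simp add: dist_real_def)
  qed
  have D2: "((\<lambda>x. ln (cos (pi * x / 2))) has_field_derivative (\<Sum>k. f' k t)) (at t)"
  proof (rule has_field_derivative_transform_within_open[OF D1, of S])
    show "open S" unfolding S_def by simp
    show "t \<in> S" using S tb by simp
    fix x assume "x \<in> S"
    then have "\<bar>x\<bar> < 1" using S b1 by auto
    then show "(\<Sum>k. f k x) = ln (cos (pi * x / 2))"
    proof -
      have "(\<Sum>k. f k x) = (\<Sum>k. ln (1 - x^2 / (real (2*k+1))^2))"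
        using feq[OF \<open>\<bar>x\<bar> < 1\<close>] by simp
      also have "\<dots> = ln (cos (pi * x / 2))"
        using ln_cos_sums[OF \<open>\<bar>x\<bar> < 1\<close>] by (rule sums_unique[symmetric])
      finally show ?thesis .
    qed
  qed
  have c: "0 < cos (pi * t / 2)" by (rule cos_half_pos[OF assms])
  have D3: "((\<lambda>x. ln (cos (pi * x / 2))) has_field_derivative (- (pi/2) * tan (pi*t/2))) (at t)"
    using c by (auto intro!: derivative_eq_intros simp: tan_def field_simps)
  have E: "(\<Sum>k. f' k t) = - (pi/2) * tan (pi*t/2)" using DERIV_unique[OF D2 D3] .
  have "summable (\<lambda>k. f' k t)"
    by (rule summable_comparison_test'[OF sM, of 0]) (use bnd S tb b1 in auto)
  then have "(\<lambda>k. f' k t) sums (- (pi/2) * tan (pi*t/2))" using E by (simp add: sums_iff)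
  from sums_mult[OF this, of "-2"] show ?thesis
    unfolding f'_def by (simp add: field_simps)
qed



lemma Pfac_pos: "y < 1 \<Longrightarrow> 0 < Pfac r y"
  unfolding Pfac_def by simp

lemma ln_Pfac: "y < 1 \<Longrightarrow> ln (Pfac r y) = ln (1 - y) + (\<Sum>k=1..r. y^k / real k)"
  unfolding Pfac_def by (simp add: ln_mult)

lemma Pfac_0: "Pfac r 0 = 1"
  unfolding Pfac_def by (simp add: power_0_left)

lemma geom_aux:
  fixes y :: real assumes "y < 1"
  shows "- 1 / (1 - y) + (\<Sum>k=1..r. y^(k-1)) = - (y^r) / (1 - y)"
proof -
  have "(\<Sum>k=1..r. y^(k-1)) = (\<Sum>k<r. y^k)"
    by (simp add: sum.atLeast1_atMost_eq)
  also have "\<dots> = (1 - y^r) / (1 - y)" using assms by (simp add: sum_gp_strict)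
  finally have e: "(\<Sum>k=1..r. y^(k-1)) = (1 - y^r) / (1 - y)" .
  have "1 - y \<noteq> 0" using assms by simp
  have "-1/(1-y) + (1 - y^r)/(1-y) = (-1 + (1 - y^r))/(1-y)" by (rule add_divide_distrib[symmetric])
  then show ?thesis unfolding e by simp
qed

lemma ln_Pfac_deriv:
  fixes y :: real assumes "y < 1"
  shows "((\<lambda>y. ln (Pfac r y)) has_real_derivative (- (y^r) / (1 - y))) (at y)"
proof -
  have d: "((\<lambda>y. ln (1 - y) + (\<Sum>k=1..r. y^k / real k)) has_real_derivative
      (- 1 / (1 - y) + (\<Sum>k=1..r. y^(k-1)))) (at y)"
  proof (intro derivative_intros DERIV_sum)
    show "((\<lambda>y. ln (1 - y)) has_real_derivative - 1 / (1 - y)) (at y)"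
      using assms by (auto intro!: derivative_eq_intros)
    fix k assume "k \<in> {1..r}"
    then show "((\<lambda>y. y^k / real k) has_real_derivative y^(k-1)) (at y)"
      by (auto intro!: derivative_eq_intros)
  qed
  have "((\<lambda>y. ln (Pfac r y)) has_real_derivative (- 1 / (1 - y) + (\<Sum>k=1..r. y^(k-1)))) (at y)"
    by (rule has_field_derivative_transform_within_open[OF d, of "{..<1}"])
       (use assms ln_Pfac in auto)
  then show ?thesis using geom_aux[OF assms] by simp
qed

lemma sign_aux: "r \<ge> 1 \<Longrightarrow> (-1::real)^(r-1) * (-y)^r = - (y^r)"
proof (cases r)
  case (Suc m)
  have "(-1::real)^m * (-1)^m = 1" by (simp flip: power_mult_distrib)
  then have "(-1::real)^m * ((-1)^m * y^m) = y^m" by (metis mult.assoc mult_1)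
  then show ?thesis using Suc by (simp add: power_minus[of y])
qed simp

lemma h_deriv:
  fixes y :: real assumes "\<bar>y\<bar> < 1" "r \<ge> 1"
  shows "((\<lambda>y. ln (Pfac r y) + (-1)^(r-1) * ln (Pfac r (-y))) has_real_derivative
           (- 2 * y^r / (1 - y^2))) (at y)"
proof -
  have y1: "y < 1" "-y < 1" using assms by auto
  have d1: "((\<lambda>y. ln (Pfac r (-y))) has_real_derivative (- ((-y)^r) / (1 - (-y))) * (-1)) (at y)"
    by (rule DERIV_chain2[where g="\<lambda>y. - y", OF ln_Pfac_deriv[OF y1(2), of r]]) (auto intro!: derivative_eq_intros)
  have d: "((\<lambda>y. ln (Pfac r y) + (-1)^(r-1) * ln (Pfac r (-y))) has_real_derivative
      (- (y^r) / (1 - y) + (-1)^(r-1) * ((- ((-y)^r) / (1 - (-y))) * (-1)))) (at y)"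
    by (intro DERIV_add DERIV_cmult ln_Pfac_deriv y1 d1)
  have "(-1::real)^(r-1) * ((- ((-y)^r) / (1 - (-y))) * (-1)) = ((-1)^(r-1) * (-y)^r) / (1 + y)"
    by simp
  also have "\<dots> = - (y^r) / (1 + y)" using sign_aux[OF assms(2)] by simp
  finally have e: "(-1::real)^(r-1) * ((- ((-y)^r) / (1 - (-y))) * (-1)) = - (y^r) / (1 + y)" .
  have n1: "1 - y \<noteq> 0" "1 + y \<noteq> 0" using y1 by auto
  have e3: "- (y^r) / (1 - y) + - (y^r) / (1 + y) = - 2 * y^r / (1 - y^2)"
    using n1 by (simp add: field_simps power2_eq_square)
  show ?thesis using d unfolding e e3 .
qed

definition hh :: "nat \<Rightarrow> real \<Rightarrow> real" where
  "hh r y = ln (Pfac r y) + (-1)^(r-1) * ln (Pfac r (-y))"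
definition gg :: "nat \<Rightarrow> nat \<Rightarrow> real \<Rightarrow> real" where
  "gg r k x = (real (2*k+1) / 2)^(r-1) * hh r (x / real (2*k+1))"
definition GG :: "nat \<Rightarrow> nat \<Rightarrow> real \<Rightarrow> real" where
  "GG r k x = - (1/2^r) * x^(r-1) * (4 * x / ((real (2*k+1))^2 - x^2))"

lemma GG_alg:
  fixes n x :: real assumes "0 < n" "x^2 < n^2"
  shows "(n/2)^m * (- 2 * (x/n)^(Suc m) / (1 - (x/n)^2) * (1/n)) =
         - (1/2^(Suc m)) * x^m * (4 * x / (n^2 - x^2))"
proof -
  have d: "n^2 - x^2 > 0" using assms by simp
  have e1: "1 - (x/n)^2 = (n^2 - x^2) / n^2" using assms by (simp add: field_simps power_divide)
  show ?thesis unfolding e1 using assms d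
    by (simp add: power_divide field_simps power2_eq_square)
qed

lemma gg_deriv:
  fixes x :: real assumes "\<bar>x\<bar> < 1" "r \<ge> 1"
  shows "(gg r k has_real_derivative GG r k x) (at x)"
proof -
  define n where "n = real (2*k+1)"
  have n0: "0 < n" and n1: "1 \<le> n" unfolding n_def by auto
  have xn: "x^2 < n^2" unfolding n_def using sq_lt_odd[OF assms(1)] .
  have yx: "\<bar>x / n\<bar> < 1" using assms n1 by (simp add: abs_div field_simps)
  have "((\<lambda>x. hh r (x / n)) has_real_derivative (- 2 * (x/n)^r / (1 - (x/n)^2)) * (1/n)) (at x)"
    unfolding hh_def
    by (rule DERIV_chain2[where g="\<lambda>x. x / n", OF h_deriv[OF yx assms(2)]])
       (use n0 in \<open>auto intro!: derivative_eq_intros\<close>)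
  then have "((\<lambda>x. (n/2)^(r-1) * hh r (x / n)) has_real_derivative
         (n/2)^(r-1) * ((- 2 * (x/n)^r / (1 - (x/n)^2)) * (1/n))) (at x)"
    by (rule DERIV_cmult)
  moreover obtain m where r: "r = Suc m" using assms(2) by (cases r) auto
  ultimately show ?thesis
    unfolding gg_def GG_def n_def[symmetric] using GG_alg[OF n0 xn, of m] by simp
qed

lemma gg_0: "gg r k 0 = 0"
  unfolding gg_def hh_def by (simp add: Pfac_0)

lemma gg_factor:
  fixes x :: real assumes "\<bar>x\<bar> < 1"
  shows "(Pfac r ((x/2) / (real (2*k+1) / 2)) *
          (Pfac r (- (x/2) / (real (2*k+1) / 2)) powr ((-1) ^ (r - 1))))
          powr ((real (2*k+1) / 2) ^ (r - 1)) = exp (gg r k x)"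
proof -
  define n where "n = real (2*k+1)"
  have n1: "1 \<le> n" unfolding n_def by auto
  have e1: "(x/2) / (n / 2) = x / n" and e2: "- (x/2) / (n / 2) = - x / n" by auto
  have yx: "\<bar>x / n\<bar> < 1" using assms n1 by (simp add: abs_div field_simps)
  have y1: "x/n < 1" "- x/n < 1" using yx by linarith+
  have A: "0 < Pfac r (x/n)" and B: "0 < Pfac r (- x/n)" using y1 by (auto intro!: Pfac_pos)
  have "(Pfac r (x/n) * Pfac r (- x/n) powr ((-1) ^ (r - 1))) powr ((n / 2) ^ (r - 1))
      = exp ((n / 2) ^ (r - 1) * ln (Pfac r (x/n) * Pfac r (- x/n) powr ((-1) ^ (r - 1))))"
    using A B by (simp add: powr_def)
  also have "ln (Pfac r (x/n) * Pfac r (- x/n) powr ((-1) ^ (r - 1))) = hh r (x / n)"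
    using A B unfolding hh_def by (simp add: ln_mult)
  finally show ?thesis unfolding n_def[symmetric] e1 e2 gg_def by simp
qed

lemma GG_bound:
  fixes x b :: real assumes "\<bar>x\<bar> < b" "b < 1"
  shows "norm (GG r k x) \<le> (4/2^r) * (1 / ((1 - b^2) * (real (k+1))^2))"
proof -
  have x1: "\<bar>x\<bar> \<le> 1" using assms by linarith
  have n: "x^2 < (real (2*k+1))^2" using sq_lt_odd[of x k] assms by auto
  have "norm (GG r k x) = (4/2^r) * (\<bar>x\<bar>^(r-1) * (\<bar>x\<bar> / ((real (2*k+1))^2 - x^2)))"
    using n unfolding GG_def by (simp add: abs_mult power_abs)
  also have "\<dots> \<le> (4/2^r) * (1 * (1 / ((1 - b^2) * (real (k+1))^2)))"
    using odd_bound[OF assms, of k] x1 n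
    by (intro mult_left_mono mult_mono power_le_one) auto
  finally show ?thesis by simp
qed

theorem proposition3p3:
  fixes x :: real and r :: nat
  assumes "0 \<le> x" and "x < 1" and "r \<ge> 2"
  shows "ln (mcos r (x / 2)) =
    - (1 / 2 ^ r) * integral {0..x} (\<lambda>t. pi * t ^ (r - 1) * tan (pi * t / 2))"
proof -
  define b where "b = (x + 1) / 2"
  have xb: "x < b" "b < 1" using assms by (auto simp: b_def)
  have b0: "0 < b" using assms xb by linarith
  define S where "S = ball (0::real) b"
  have S: "y \<in> S \<longleftrightarrow> \<bar>y\<bar> < b" for y unfolding S_def by (simp add: dist_real_def)
  have r1: "r \<ge> 1" using assms by simp
  define M where "M k = (4/2^r) * (1 / ((1 - b^2) * (real (k+1))^2))" for k
  have sM: "summable M"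
    using summable_mult[OF summable_inv_sq, of "(4/2^r) / (1 - b^2)"] unfolding M_def by (simp add: mult.assoc)
  have bnd: "norm (GG r k y) \<le> M k" if "y \<in> S" for k y
    unfolding M_def using GG_bound[of y b r k] S that xb(2) by auto
  have uc: "uniformly_convergent_on S (\<lambda>n y. \<Sum>i<n. GG r i y)"
    by (rule Weierstrass_m_test'[OF bnd sM])
  have der: "(gg r k has_real_derivative GG r k y) (at y within S)" if "y \<in> S" for k y
  proof -
    have "\<bar>y\<bar> < 1" using that S xb by auto
    then show ?thesis by (rule has_field_derivative_at_within[OF gg_deriv[OF _ r1]])
  qed
  have summ0: "summable (\<lambda>k. gg r k 0)" by (simp add: gg_0)
  have cS: "convex S" unfolding S_def by simp
  have S0: "0 \<in> S" using S b0 by simp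
  have intS: "y \<in> interior S" if "y \<in> S" for y using that unfolding S_def by simp
  have D: "((\<lambda>y. \<Sum>k. gg r k y) has_real_derivative (\<Sum>k. GG r k t)) (at t)" if "t \<in> S" for t
    by (rule has_field_derivative_series'(2)[where f="gg r" and f'="GG r" and S=S and x=t,
          OF cS der uc S0 summ0 intS[OF that]])
  have SUMM: "summable (\<lambda>k. gg r k y)" if "y \<in> S" for y
    by (rule has_field_derivative_series'(1)[where f="gg r" and f'="GG r" and S=S and x=y,
          OF cS der uc S0 summ0 intS[OF that]])
  have Geq: "(\<Sum>k. GG r k t) = - (1/2^r) * (pi * t^(r-1) * tan (pi*t/2))" if "\<bar>t\<bar> < 1" for t
  proof -
    have "(\<lambda>k. (- (1/2^r) * t^(r-1)) * (4 * t / ((real (2*k+1))^2 - t^2))) sums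
          ((- (1/2^r) * t^(r-1)) * (pi * tan (pi * t / 2)))"
      by (rule sums_mult[OF tan_series[OF that]])
    then have "(\<lambda>k. GG r k t) sums ((- (1/2^r) * t^(r-1)) * (pi * tan (pi * t / 2)))"
      unfolding GG_def by simp
    then show ?thesis by (simp add: sums_iff mult_ac)
  qed
  define F where "F y = (\<Sum>k. gg r k y)" for y
  define H where "H t = pi * t^(r-1) * tan (pi*t/2)" for t :: real
  have FTC: "((\<lambda>t. - (1/2^r) * H t) has_integral (F x - F 0)) {0..x}"
  proof (rule fundamental_theorem_of_calculus)
    show "0 \<le> x" using assms by simp
    fix t assume t: "t \<in> {0..x}"
    then have tS: "t \<in> S" using S xb by auto
    have t1: "\<bar>t\<bar> < 1" using tS S xb by auto
    have "(F has_real_derivative (- (1/2^r) * H t)) (at t)"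
      using D[OF tS] Geq[OF t1] unfolding F_def H_def by simp
    then have "(F has_real_derivative (- (1/2^r) * H t)) (at t within {0..x})"
      by (rule has_field_derivative_at_within)
    then show "(F has_vector_derivative (- (1/2^r) * H t)) (at t within {0..x})"
      by (simp add: has_real_derivative_iff_has_vector_derivative)
  qed
  have F0: "F 0 = 0" unfolding F_def by (simp add: gg_0)
  have "((\<lambda>t. (- (2^r)) * (- (1/2^r) * H t)) has_integral (- (2^r)) * (F x - F 0)) {0..x}"
    by (rule has_integral_mult_right[OF FTC])
  then have "(H has_integral (- (2^r)) * F x) {0..x}" using F0 by simp
  then have I: "integral {0..x} H = - (2^r) * F x" by (rule integral_unique)
  have x1: "\<bar>x\<bar> < 1" using assms by simp
  have xS: "x \<in> S" using S xb assms by simp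
  have "mcos r (x / 2) = (\<Prod>k. exp (gg r k x))"
    unfolding mcos_def using gg_factor[OF x1] by simp
  also have "\<dots> = exp (F x)" unfolding F_def by (rule prodinf_exp[OF SUMM[OF xS]])
  finally have "ln (mcos r (x / 2)) = F x" by simp
  then show ?thesis using I unfolding H_def by simp
qed

end
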